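(* Suppose $p=1$, or $p>1$ and $d_{\mathcal Y}(y_1,y_2)\le\max\{d_{\mathcal Y}(y_1,y_0),d_{\mathcal Y}(y_0,y_2)\}$ for all $y_1,y_2\in\mathcal Y$. Let $0\le m\le n\le l$ with $n\ge1$ and let $([m],v,e),([n],w,f)$ be graphs with attributes in $\mathcal X,\mathcal Y$. Extend $([m],v,e)$ to $([l],v,e)$ by $v_i=x_*$ for $m+1\le i\le l$ and $e_{ii'}=y_0$ whenever $\max\{i,i'\}\ge m+1$, and extend $([n],w,f)$ to $([l],w,f)$ by $w_i=x'_*$ for $n+1\le i\le l$ and $f_{ii'}=y_0$ whenever $\max\{i,i'\}\ge n+1$. Then $$d_{\mathbb G,R_2}(([m],v,e),([n],w,f))\le\Big(D_l\big(([l],v,e),([l],w,f)\big)^p+C_{\mathcal Y}^p\frac{n-m}{n}\Big)^{1/p}.$$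
   Context: $(\mathcal X,d_{\mathcal X})$, $(\mathcal Y,d_{\mathcal Y})$ are pseudometric spaces with $\mathrm{diam}(\mathcal X)\le C_{\mathcal X}$, $\mathrm{diam}(\mathcal Y)\le C_{\mathcal Y}$, $y_0\in\mathcal Y$ a distinguished "no edge" element, $p\ge1$, $C_2^p\ge C_{\mathcal X}^p+C_{\mathcal Y}^p$. Two new points $x_*,x'_*$ are adjoined to $\mathcal X$ with $d_{\mathcal X}(x_*,x)^p=d_{\mathcal X}(x,x_* )^p=C_2^p-C_{\mathcal Y}^p$ and $d_{\mathcal X}(x'_*,x)=d_{\mathcal X}(x,x'_* )=d_{\mathcal X}(x_*,x'_* )=d_{\mathcal X}(x'_*,x_* )=C_2$ for all $x\in\mathcal X$ (zero self-distances). A graph $([n],v,e)$ has vertex map into $\mathcal X\cup\{x_*,x'_*\}$ and symmetric $e:[n]^2\to\mathcal Y$ with $e_{ii}=y_0$; $S_n$ is the set of permutations of $[n]=\{1,\dots,n\}$. GOSPA2 distance (order $p$, penalty $C_2$; graphs with attributes in $\mathcal X$): for $n\ge\max\{m,1\}$, with $0/0:=0$, $$d_{\mathbb G,R_2}(([m],v,e),([n],w,f))=n^{-1/p}\min_{\pi\in S_n}\Big[(n-m)C_2^p+\sum_{i\in[m]}d_{\mathcal X}(v_i,w_{\pi(i)})^p+\frac{1}{2(n-1)}\Big(\sum_{(i,i')\in[m]^2}d_{\mathcal Y}(e_{ii'},f_{\pi(i)\pi(i')})^p+\sum_{(i,i')\in[n]^2\setminus[m]^2}d_{\mathcal Y}(y_0,f_{\pi(i)\pi(i')})^p\Big)\Big]^{1/p}.$$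 For two graphs of equal size $N\ge1$ (attributes in the extended spaces), $$D_N\big(([N],a,g),([N],b,h)\big)=N^{-1/p}\min_{\pi\in S_N}\Big[\sum_{i\in[N]}d_{\mathcal X}(a_i,b_{\pi(i)})^p+\frac{1}{2(N-1)}\sum_{(i,i')\in[N]^2}d_{\mathcal Y}(g_{ii'},h_{\pi(i)\pi(i')})^p\Big]^{1/p}.$$ *)

theory Defs
  imports "HOL-Analysis.Analysis" "HOL-Combinatorics.Permutations"
begin

definition pseudometric :: "('a \<Rightarrow> 'a \<Rightarrow> real) \<Rightarrow> bool" where
  "pseudometric d \<longleftrightarrow> (\<forall>x. d x x = 0) \<and> (\<forall>x y. d x y = d y x)
     \<and> (\<forall>x y z. d x z \<le> d x y + d y z)"

text \<open>The space X with the two adjoined points x_* (Star) and x'_* (Star').\<close>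
datatype 'x ext = Orig 'x | Star | Star'

fun dXext :: "real \<Rightarrow> real \<Rightarrow> real \<Rightarrow> ('x \<Rightarrow> 'x \<Rightarrow> real) \<Rightarrow> 'x ext \<Rightarrow> 'x ext \<Rightarrow> real" where
  "dXext p C2 CY dX (Orig x) (Orig y) = dX x y"
| "dXext p C2 CY dX Star Star = 0"
| "dXext p C2 CY dX Star' Star' = 0"
| "dXext p C2 CY dX Star (Orig x) = (C2 powr p - CY powr p) powr (1/p)"
| "dXext p C2 CY dX (Orig x) Star = (C2 powr p - CY powr p) powr (1/p)"
| "dXext p C2 CY dX Star' (Orig x) = C2"
| "dXext p C2 CY dX (Orig x) Star' = C2"
| "dXext p C2 CY dX Star Star' = C2"
| "dXext p C2 CY dX Star' Star = C2"

definition is_graph :: "'y \<Rightarrow> nat \<Rightarrow> (nat \<Rightarrow> nat \<Rightarrow> 'y) \<Rightarrow> bool" where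
  "is_graph y0 m e \<longleftrightarrow> (\<forall>i\<in>{1..m}. \<forall>i'\<in>{1..m}. e i i' = e i' i) \<and> (\<forall>i\<in>{1..m}. e i i = y0)"

text \<open>GOSPA2 distance (requires n \<ge> max m 1). Division by zero gives 0 in HOL (0/0 := 0).\<close>
definition gospa2_cost ::
  "real \<Rightarrow> real \<Rightarrow> ('x \<Rightarrow> 'x \<Rightarrow> real) \<Rightarrow> ('y \<Rightarrow> 'y \<Rightarrow> real) \<Rightarrow> 'y \<Rightarrow>
   nat \<Rightarrow> (nat \<Rightarrow> 'x) \<Rightarrow> (nat \<Rightarrow> nat \<Rightarrow> 'y) \<Rightarrow>
   nat \<Rightarrow> (nat \<Rightarrow> 'x) \<Rightarrow> (nat \<Rightarrow> nat \<Rightarrow> 'y) \<Rightarrow> (nat \<Rightarrow> nat) \<Rightarrow> real" where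
  "gospa2_cost p C2 dX dY y0 m v e n w f \<pi> =
     real (n - m) * C2 powr p + (\<Sum>i\<in>{1..m}. dX (v i) (w (\<pi> i)) powr p)
     + 1 / (2 * (real n - 1)) *
       ((\<Sum>(i,i')\<in>{1..m}\<times>{1..m}. dY (e i i') (f (\<pi> i) (\<pi> i')) powr p)
        + (\<Sum>(i,i')\<in>({1..n}\<times>{1..n}) - ({1..m}\<times>{1..m}). dY y0 (f (\<pi> i) (\<pi> i')) powr p))"

definition dGR2 ::
  "real \<Rightarrow> real \<Rightarrow> ('x \<Rightarrow> 'x \<Rightarrow> real) \<Rightarrow> ('y \<Rightarrow> 'y \<Rightarrow> real) \<Rightarrow> 'y \<Rightarrow>
   nat \<Rightarrow> (nat \<Rightarrow> 'x) \<Rightarrow> (nat \<Rightarrow> nat \<Rightarrow> 'y) \<Rightarrow>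
   nat \<Rightarrow> (nat \<Rightarrow> 'x) \<Rightarrow> (nat \<Rightarrow> nat \<Rightarrow> 'y) \<Rightarrow> real" where
  "dGR2 p C2 dX dY y0 m v e n w f =
     real n powr (- 1 / p) *
     (Min ((\<lambda>\<pi>. gospa2_cost p C2 dX dY y0 m v e n w f \<pi>) ` {\<pi>. \<pi> permutes {1..n}})) powr (1 / p)"

definition D_cost ::
  "real \<Rightarrow> ('a \<Rightarrow> 'a \<Rightarrow> real) \<Rightarrow> ('y \<Rightarrow> 'y \<Rightarrow> real) \<Rightarrow> nat \<Rightarrow>
   (nat \<Rightarrow> 'a) \<Rightarrow> (nat \<Rightarrow> nat \<Rightarrow> 'y) \<Rightarrow> (nat \<Rightarrow> 'a) \<Rightarrow> (nat \<Rightarrow> nat \<Rightarrow> 'y) \<Rightarrow> (nat \<Rightarrow> nat) \<Rightarrow> real" where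
  "D_cost p dA dY N a g b h \<pi> =
     (\<Sum>i\<in>{1..N}. dA (a i) (b (\<pi> i)) powr p)
     + 1 / (2 * (real N - 1)) * (\<Sum>(i,i')\<in>{1..N}\<times>{1..N}. dY (g i i') (h (\<pi> i) (\<pi> i')) powr p)"

definition D_dist ::
  "real \<Rightarrow> ('a \<Rightarrow> 'a \<Rightarrow> real) \<Rightarrow> ('y \<Rightarrow> 'y \<Rightarrow> real) \<Rightarrow> nat \<Rightarrow>
   (nat \<Rightarrow> 'a) \<Rightarrow> (nat \<Rightarrow> nat \<Rightarrow> 'y) \<Rightarrow> (nat \<Rightarrow> 'a) \<Rightarrow> (nat \<Rightarrow> nat \<Rightarrow> 'y) \<Rightarrow> real" where
  "D_dist p dA dY N a g b h =
     real N powr (- 1 / p) *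
     (Min ((\<lambda>\<pi>. D_cost p dA dY N a g b h \<pi>) ` {\<pi>. \<pi> permutes {1..N}})) powr (1 / p)"

definition ext_vert :: "nat \<Rightarrow> (nat \<Rightarrow> 'x) \<Rightarrow> 'x ext \<Rightarrow> nat \<Rightarrow> 'x ext" where
  "ext_vert m v pad = (\<lambda>i. if i \<le> m then Orig (v i) else pad)"

definition ext_edge :: "'y \<Rightarrow> nat \<Rightarrow> (nat \<Rightarrow> nat \<Rightarrow> 'y) \<Rightarrow> nat \<Rightarrow> nat \<Rightarrow> 'y" where
  "ext_edge y0 m e = (\<lambda>i i'. if max i i' \<ge> m + 1 then y0 else e i i')"

end

theory Submission
  imports Defs
begin

lemma arith_vertex:
  fixes L N M Fr s cx cy c2 Gv Vd :: real
  assumes "0 \<le> Fr" "Fr \<le> M" "M \<le> N" "N \<le> L" "0 \<le> s" "s \<le> Fr*cx" "cx \<ge> 0" "cy \<ge> 0"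
    "c2 \<ge> cx+cy" "Gv \<le> s + (M-Fr)*cx" "Vd \<ge> s + (L-Fr)*c2 - (N-Fr)*cy"
  shows "L*((N-M)*c2 + Gv) \<le> N*Vd + L*(N-M)*cy - N*(L-N)*cy"
proof -
  have "L \<ge> 0" using assms by linarith
  have 1: "L*Gv \<le> L*(s + (M-Fr)*cx)" using assms \<open>L\<ge>0\<close> by (intro mult_left_mono) auto
  have 2: "N*Vd \<ge> N*(s + (L-Fr)*c2 - (N-Fr)*cy)" using assms by (intro mult_left_mono) auto
  have 3: "(L-N)*(Fr*cx - s) \<ge> 0" using assms by auto
  have "L*M \<ge> N*Fr" using assms by (intro mult_mono) auto
  then have 4: "(L*M-N*Fr)*(c2-cx-cy) \<ge> 0" using assms by auto
  show ?thesis using 1 2 3 4 by (simp add: algebra_simps)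
qed

lemma arith_edge:
  fixes L N a b cy :: real
  assumes "1 \<le> N" "N \<le> L" "a \<le> b" "0 \<le> a" "a \<le> N*(N-1)*cy" "cy \<ge> 0"
    and int: "(L-N)*(L-N-1) \<ge> 0"
  shows "L * (1 / (2*(N-1)) * a) \<le> N*(1/(2*(L-1))*b) + N*(L-N)*cy"
proof (cases "N = 1")
  case True
  then show ?thesis using assms by (auto intro!: mult_nonneg_nonneg divide_nonneg_nonneg)
next
  case False
  then have N1: "N > 1" using assms by auto
  then have L1: "L > 1" using assms by auto
  have e1: "L * (1 / (2*(N-1)) * a) = L*a/(2*(N-1))" by simp
  have e2: "N*(1/(2*(L-1))*b) = N*b/(2*(L-1))" by simp
  have "L*a/(2*(N-1)) \<le> N*b/(2*(L-1)) + N*(L-N)*cy"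
  proof -
    have A: "N*(N-1)*a \<le> N*(N-1)*b" using assms N1 by (intro mult_left_mono) auto
    have B: "(L-N)*(L+N-1)*a \<le> (L-N)*(L+N-1)*(N*(N-1)*cy)" using assms N1
      by (intro mult_left_mono) auto
    have C: "(L-N)*(L+N-1) \<le> (L-N)*(2*(L-1))" using int by (simp add: algebra_simps)
    have D: "(L-N)*(L+N-1)*(N*(N-1)*cy) \<le> (L-N)*(2*(L-1))*(N*(N-1)*cy)"
      using C assms N1 by (intro mult_right_mono) auto
    have "L*(L-1)*a \<le> N*(N-1)*b + 2*(L-N)*N*(N-1)*(L-1)*cy"
      using A B D by (simp add: algebra_simps)
    then show ?thesis using N1 L1 by (simp add: field_simps)
  qed
  then show ?thesis using e1 e2 by simp
qed

lemma tri_powr: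
  fixes dY :: "'y \<Rightarrow> 'y \<Rightarrow> real"
  assumes pmY: "pseudometric dY" and p1: "p \<ge> 1"
    and ultra: "p = 1 \<or> (p > 1 \<and> (\<forall>y1 y2. dY y1 y2 \<le> max (dY y1 y0) (dY y0 y2)))"
  shows "dY y1 y2 powr p \<le> dY y1 y0 powr p + dY y0 y2 powr p"
proof -
  have nn: "\<And>x y. 0 \<le> dY x y"
  proof -
    fix x y
    have "dY x x \<le> dY x y + dY y x" "dY x x = 0" "dY y x = dY x y"
      using pmY unfolding pseudometric_def by blast+
    then show "0 \<le> dY x y" by linarith
  qed
  show ?thesis
  proof (cases "p = 1")
    case True
    have "dY y1 y2 \<le> dY y1 y0 + dY y0 y2" using pmY unfolding pseudometric_def by blast
    then show ?thesis using True nn by (simp add: powr_one)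
  next
    case False
    then have u: "dY y1 y2 \<le> max (dY y1 y0) (dY y0 y2)" using ultra by blast
    have "dY y1 y2 powr p \<le> (max (dY y1 y0) (dY y0 y2)) powr p"
      using u nn p1 by (intro powr_mono2) auto
    also have "\<dots> \<le> dY y1 y0 powr p + dY y0 y2 powr p"
      by (cases "dY y1 y0 \<le> dY y0 y2") (auto simp: max_def)
    finally show ?thesis .
  qed
qed

theorem lemmaD:
  fixes dX :: "'x \<Rightarrow> 'x \<Rightarrow> real" and dY :: "'y \<Rightarrow> 'y \<Rightarrow> real"
    and y0 :: 'y and p CX CY C2 :: real and m n l :: nat
    and v w :: "nat \<Rightarrow> 'x" and e f :: "nat \<Rightarrow> nat \<Rightarrow> 'y"
  assumes pmX: "pseudometric dX" and pmY: "pseudometric dY"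
    and diamX: "\<forall>x x'. dX x x' \<le> CX" and diamY: "\<forall>y y'. dY y y' \<le> CY"
    and p1: "p \<ge> 1"
    and C2nn: "C2 \<ge> 0"
    and C2: "C2 powr p \<ge> CX powr p + CY powr p"
    and ultra: "p = 1 \<or> (p > 1 \<and> (\<forall>y1 y2. dY y1 y2 \<le> max (dY y1 y0) (dY y0 y2)))"
    and mn: "m \<le> n" and nl: "n \<le> l" and n1: "n \<ge> 1"
    and ge: "is_graph y0 m e" and gf: "is_graph y0 n f"
  shows "dGR2 p C2 dX dY y0 m v e n w f
         \<le> (D_dist p (dXext p C2 CY dX) dY l
               (ext_vert m v Star) (ext_edge y0 m e)
               (ext_vert n w Star') (ext_edge y0 n f) powr p
             + CY powr p * (real (n - m) / real n)) powr (1 / p)"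
proof -
  define a where "a = ext_vert m v Star"
  define b where "b = ext_vert n w Star'"
  define g where "g = ext_edge y0 m e"
  define h where "h = ext_edge y0 n f"
  define dA where "dA = dXext p C2 CY dX"
  define cx where "cx = CX powr p"
  define cy where "cy = CY powr p"
  define c2 where "c2 = C2 powr p"
  have p0: "p > 0" using p1 by linarith
  have dYnn: "\<And>x y. 0 \<le> dY x y"
  proof -
    fix x y
    have "dY x x \<le> dY x y + dY y x" "dY x x = 0" "dY y x = dY x y"
      using pmY unfolding pseudometric_def by blast+
    then show "0 \<le> dY x y" by linarith
  qed
  have dXnn: "\<And>x y. 0 \<le> dX x y"
  proof -
    fix x y
    have "dX x x \<le> dX x y + dX y x" "dX x x = 0" "dX y x = dX x y"
      using pmX unfolding pseudometric_def by blast+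
    then show "0 \<le> dX x y" by linarith
  qed
  have dY0: "\<And>x. dY x x = 0" using pmY unfolding pseudometric_def by blast
  have CYnn: "0 \<le> CY" using diamY dYnn[of y0 y0] by (meson order_trans)
  have CXnn: "0 \<le> CX" using diamX dXnn[of undefined undefined] by (meson order_trans)
  have cxnn: "cx \<ge> 0" and cynn: "cy \<ge> 0" unfolding cx_def cy_def by auto
  have c2ge: "c2 \<ge> cx + cy" using C2 unfolding c2_def cx_def cy_def by simp
  have dYle: "\<And>x y. dY x y powr p \<le> cy"
    unfolding cy_def using diamY dYnn p0 by (intro powr_mono2) auto
  have dXle: "\<And>x y. dX x y powr p \<le> cx"
    unfolding cx_def using diamX dXnn p0 by (intro powr_mono2) auto
  have tri: "\<And>y1 y2. dY y1 y2 powr p \<le> dY y1 y0 powr p + dY y0 y2 powr p"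
    using tri_powr[OF pmY p1 ultra] .
  have zp: "(0::real) powr p = 0" by simp
  have dAOO: "\<And>x y. dA (Orig x) (Orig y) powr p = dX x y powr p" unfolding dA_def by simp
  have dAOS': "\<And>x. dA (Orig x) Star' powr p = c2" unfolding dA_def c2_def by simp
  have dASS': "dA Star Star' powr p = c2" unfolding dA_def c2_def by simp
  have dASO: "\<And>x. dA Star (Orig x) powr p = c2 - cy"
  proof -
    fix x
    have "c2 - cy \<ge> 0" using c2ge cxnn by linarith
    then show "dA Star (Orig x) powr p = c2 - cy"
      unfolding dA_def using p0 by (simp add: powr_powr c2_def cy_def powr_one)
  qed

  define Dset where "Dset = (\<lambda>\<pi>. D_cost p dA dY l a g b h \<pi>) ` {\<pi>. \<pi> permutes {1..l}}"
  have finD: "finite Dset" unfolding Dset_def by (simp add: finite_permutations)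
  have neD: "Dset \<noteq> {}" unfolding Dset_def using permutes_id by blast
  obtain \<pi>0 where \<pi>0: "\<pi>0 permutes {1..l}" and minD: "Min Dset = D_cost p dA dY l a g b h \<pi>0"
    using Min_in[OF finD neD] unfolding Dset_def by auto
  have \<pi>0in: "\<And>i. i \<in> {1..l} \<Longrightarrow> \<pi>0 i \<in> {1..l}" by (rule permutes_in_image[OF \<pi>0, THEN iffD2])

  define W where "W = {i\<in>{1..l}. \<pi>0 i \<in> {1..n}}"
  define F where "F = {1..m} \<inter> W"
  have Wsub: "W \<subseteq> {1..l}" unfolding W_def by auto
  have finW: "finite W" using Wsub finite_subset by blast
  have \<pi>W: "bij_betw \<pi>0 W {1..n}"
  proof -
    have inj: "inj_on \<pi>0 W" using permutes_inj[OF \<pi>0] by (auto intro: inj_on_subset)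
    have "\<pi>0 ` W = {1..n}"
    proof
      show "\<pi>0 ` W \<subseteq> {1..n}" unfolding W_def by auto
      show "{1..n} \<subseteq> \<pi>0 ` W"
      proof
        fix j assume j: "j \<in> {1..n}"
        then have "j \<in> {1..l}" using nl by auto
        then have "j \<in> \<pi>0 ` {1..l}" using permutes_image[OF \<pi>0] by simp
        then obtain i where "i \<in> {1..l}" "j = \<pi>0 i" by auto
        then show "j \<in> \<pi>0 ` W" unfolding W_def using j by auto
      qed
    qed
    then show ?thesis using inj unfolding bij_betw_def by auto
  qed
  have cardW: "card W = n" using bij_betw_same_card[OF \<pi>W] by simp
  have FW: "F \<subseteq> W" and Fm: "F \<subseteq> {1..m}" unfolding F_def by auto
  have Fn: "F \<subseteq> {1..n}" using Fm mn by auto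
  have finF: "finite F" using Fm finite_subset by blast
  have cardF: "card F \<le> m" using card_mono[OF _ Fm] by simp
  have "card ({1..n} - F) = card (W - F)"
    using card_Diff_subset[OF finF Fn] card_Diff_subset[OF finF FW] cardW by simp
  then obtain \<tau>0 where \<tau>0: "bij_betw \<tau>0 ({1..n} - F) (W - F)"
    using finite_same_card_bij[of "{1..n} - F" "W - F"] finW by auto
  define \<tau> where "\<tau> = (\<lambda>i. if i \<in> F then i else \<tau>0 i)"
  have \<tau>bij: "bij_betw \<tau> {1..n} W"
  proof -
    have b1: "bij_betw \<tau> F F" unfolding \<tau>_def by (simp add: bij_betw_def inj_on_def)
    have b2: "bij_betw \<tau> ({1..n} - F) (W - F)"
      using \<tau>0 by (rule bij_betw_cong[THEN iffD1, rotated]) (simp add: \<tau>_def)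
    have "bij_betw \<tau> (F \<union> ({1..n} - F)) (F \<union> (W - F))"
      by (rule bij_betw_combine[OF b1 b2]) auto
    moreover have "F \<union> ({1..n} - F) = {1..n}" "F \<union> (W - F) = W" using Fn FW by auto
    ultimately show ?thesis by simp
  qed
  have \<tau>F: "\<And>i. i \<in> F \<Longrightarrow> \<tau> i = i" unfolding \<tau>_def by simp
  have \<tau>out: "\<And>i. i \<in> {1..n} \<Longrightarrow> i \<notin> F \<Longrightarrow> \<tau> i \<in> W \<and> m < \<tau> i"
  proof -
    fix i assume i: "i \<in> {1..n}" "i \<notin> F"
    then have "\<tau> i \<in> W - F" using \<tau>0 unfolding \<tau>_def bij_betw_def by auto
    then show "\<tau> i \<in> W \<and> m < \<tau> i" unfolding F_def W_def by auto
  qed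
  define \<sigma> where "\<sigma> = (\<lambda>i. if i \<in> {1..n} then \<pi>0 (\<tau> i) else i)"
  have \<sigma>perm: "\<sigma> permutes {1..n}"
  proof (rule bij_imp_permutes)
    have "bij_betw (\<pi>0 \<circ> \<tau>) {1..n} {1..n}" using bij_betw_trans[OF \<tau>bij \<pi>W] .
    then show "bij_betw \<sigma> {1..n} {1..n}"
      by (rule bij_betw_cong[THEN iffD1, rotated]) (simp add: \<sigma>_def)
  qed (auto simp add: \<sigma>_def)
  have \<sigma>v: "\<And>i. i \<in> {1..n} \<Longrightarrow> \<sigma> i = \<pi>0 (\<tau> i)" unfolding \<sigma>_def by simp
  have \<sigma>in: "\<And>i. i \<in> {1..n} \<Longrightarrow> \<sigma> i \<in> {1..n}" by (rule permutes_in_image[OF \<sigma>perm, THEN iffD2])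
  have \<tau>W: "\<And>i. i \<in> {1..n} \<Longrightarrow> \<tau> i \<in> W" using \<tau>bij unfolding bij_betw_def by auto

  define T where "T = (\<lambda>(i,i'). dY (g i i') (h (\<pi>0 i) (\<pi>0 i')) powr p)"
  define Gt where "Gt = (\<lambda>(i,i'). dY (g i i') (h (\<sigma> i) (\<sigma> i')) powr p)"
  define SD where "SD = sum T ({1..l}\<times>{1..l})"
  define SG where "SG = sum Gt ({1..n}\<times>{1..n})"
  have Tnn: "\<And>q. 0 \<le> T q" unfolding T_def by auto
  have gospa_edge: "(\<Sum>(i,i')\<in>{1..m}\<times>{1..m}. dY (e i i') (f (\<sigma> i) (\<sigma> i')) powr p)
        + (\<Sum>(i,i')\<in>({1..n}\<times>{1..n}) - ({1..m}\<times>{1..m}). dY y0 (f (\<sigma> i) (\<sigma> i')) powr p) = SG"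
  proof -
    have s1: "(\<Sum>(i,i')\<in>{1..m}\<times>{1..m}. dY (e i i') (f (\<sigma> i) (\<sigma> i')) powr p) = sum Gt ({1..m}\<times>{1..m})"
    proof (rule sum.cong)
      fix q assume q: "q \<in> {1..m}\<times>{1..m}"
      then obtain i i' where qi: "q = (i,i')" "i \<in> {1..m}" "i' \<in> {1..m}" by auto
      then have "\<sigma> i \<in> {1..n}" "\<sigma> i' \<in> {1..n}" using \<sigma>in mn by auto
      then show "(case q of (i,i') \<Rightarrow> dY (e i i') (f (\<sigma> i) (\<sigma> i')) powr p) = Gt q"
        using qi unfolding Gt_def g_def h_def ext_edge_def by auto
    qed simp
    have s2: "(\<Sum>(i,i')\<in>({1..n}\<times>{1..n}) - ({1..m}\<times>{1..m}). dY y0 (f (\<sigma> i) (\<sigma> i')) powr p)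
        = sum Gt ({1..n}\<times>{1..n} - {1..m}\<times>{1..m})"
    proof (rule sum.cong)
      fix q assume q: "q \<in> {1..n}\<times>{1..n} - {1..m}\<times>{1..m}"
      obtain i i' where qi0: "q = (i,i')" by (cases q)
      have qi: "q = (i,i')" "i \<in> {1..n}" "i' \<in> {1..n}" "\<not> (i \<le> m \<and> i' \<le> m)"
        using q qi0 by auto
      then have "\<sigma> i \<in> {1..n}" "\<sigma> i' \<in> {1..n}" using \<sigma>in by auto
      then show "(case q of (i,i') \<Rightarrow> dY y0 (f (\<sigma> i) (\<sigma> i')) powr p) = Gt q"
        using qi unfolding Gt_def g_def h_def ext_edge_def by auto
    qed simp
    have "SG = sum Gt ({1..n}\<times>{1..n} - {1..m}\<times>{1..m}) + sum Gt ({1..m}\<times>{1..m})"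
      unfolding SG_def using mn by (intro sum.subset_diff) auto
    then show ?thesis using s1 s2 by simp
  qed

  have SG_SD: "SG \<le> SD"
  proof -
    define H where "H = (\<lambda>q. (if q \<in> {1..m}\<times>{1..m} then T q else 0)
                      + (if q \<in> F\<times>F then 0 else T (\<tau> (fst q), \<tau> (snd q))))"
    have pw: "\<And>q. q \<in> {1..n}\<times>{1..n} \<Longrightarrow> Gt q \<le> H q"
    proof -
      fix q assume q: "q \<in> {1..n}\<times>{1..n}"
      then obtain i i' where qi: "q = (i,i')" "i \<in> {1..n}" "i' \<in> {1..n}" by auto
      show "Gt q \<le> H q"
      proof (cases "i \<in> F \<and> i' \<in> F")
        case True
        then have "\<sigma> i = \<pi>0 i" "\<sigma> i' = \<pi>0 i'" using \<sigma>v \<tau>F qi by auto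
        moreover have "i \<in> {1..m}" "i' \<in> {1..m}" using True Fm by auto
        ultimately show ?thesis using True qi unfolding Gt_def H_def T_def by auto
      next
        case False
        have "Gt q \<le> dY (g i i') y0 powr p + dY y0 (h (\<sigma> i) (\<sigma> i')) powr p"
          using qi tri unfolding Gt_def by auto
        also have "dY y0 (h (\<sigma> i) (\<sigma> i')) powr p = T (\<tau> i, \<tau> i')"
        proof -
          have "m < \<tau> i \<or> m < \<tau> i'" using False \<tau>out qi by blast
          then have "g (\<tau> i) (\<tau> i') = y0" unfolding g_def ext_edge_def by auto
          then show ?thesis unfolding T_def using \<sigma>v qi by auto
        qed
        also have "dY (g i i') y0 powr p \<le> (if q \<in> {1..m}\<times>{1..m} then T q else 0)"
        proof (cases "q \<in> {1..m}\<times>{1..m}")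
          case True
          then have im: "i \<in> {1..m}" "i' \<in> {1..m}" using qi by auto
          have "i \<notin> W \<or> i' \<notin> W" using False im unfolding F_def by auto
          then have "\<pi>0 i \<notin> {1..n} \<or> \<pi>0 i' \<notin> {1..n}" using im mn nl unfolding W_def by auto
          moreover have "\<pi>0 i \<ge> 1" "\<pi>0 i' \<ge> 1" using \<pi>0in im mn nl by fastforce+
          ultimately have "h (\<pi>0 i) (\<pi>0 i') = y0" unfolding h_def ext_edge_def by auto
          then show ?thesis using True qi unfolding T_def by simp
        next
          case False
          then have "g i i' = y0" using qi unfolding g_def ext_edge_def by auto
          then show ?thesis using False dY0 by simp
        qed
        finally show ?thesis using False qi unfolding H_def by auto
      qed
    qed
    have "SG \<le> sum H ({1..n}\<times>{1..n})" unfolding SG_def using pw by (intro sum_mono) auto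
    also have "sum H ({1..n}\<times>{1..n}) = sum T ({1..m}\<times>{1..m})
        + sum (\<lambda>q. T (\<tau> (fst q), \<tau> (snd q))) ({1..n}\<times>{1..n} - F\<times>F)"
    proof -
      have a1: "sum (\<lambda>q. if q \<in> {1..m}\<times>{1..m} then T q else 0) ({1..n}\<times>{1..n})
          = sum T ({1..n}\<times>{1..n} \<inter> {1..m}\<times>{1..m})"
        by (rule sum.inter_restrict[symmetric]) auto
      have a2: "{1..n}\<times>{1..n} \<inter> {1..m}\<times>{1..m} = {1..m}\<times>{1..m}" using mn by auto
      have a3: "sum (\<lambda>q. if q \<in> F\<times>F then 0 else T (\<tau> (fst q), \<tau> (snd q))) ({1..n}\<times>{1..n})
          = sum (\<lambda>q. T (\<tau> (fst q), \<tau> (snd q))) ({1..n}\<times>{1..n} - F\<times>F)"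
        by (simp add: sum.If_cases Diff_eq)
      show ?thesis unfolding H_def sum.distrib a1 a2 a3 ..
    qed
    also have "sum (\<lambda>q. T (\<tau> (fst q), \<tau> (snd q))) ({1..n}\<times>{1..n} - F\<times>F)
        = sum T (map_prod \<tau> \<tau> ` ({1..n}\<times>{1..n} - F\<times>F))"
    proof -
      have "inj_on (map_prod \<tau> \<tau>) ({1..n}\<times>{1..n})"
        using \<tau>bij unfolding bij_betw_def by (intro map_prod_inj_on) auto
      then have "inj_on (map_prod \<tau> \<tau>) ({1..n}\<times>{1..n} - F\<times>F)" by (rule inj_on_subset) auto
      then have "sum T (map_prod \<tau> \<tau> ` ({1..n}\<times>{1..n} - F\<times>F))
          = sum (T \<circ> map_prod \<tau> \<tau>) ({1..n}\<times>{1..n} - F\<times>F)" by (rule sum.reindex)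
      also have "\<dots> = sum (\<lambda>q. T (\<tau> (fst q), \<tau> (snd q))) ({1..n}\<times>{1..n} - F\<times>F)"
        by (rule sum.cong) (auto simp: map_prod_def split: prod.splits)
      finally show ?thesis by simp
    qed
    also have "sum T ({1..m}\<times>{1..m}) + sum T (map_prod \<tau> \<tau> ` ({1..n}\<times>{1..n} - F\<times>F))
        = sum T ({1..m}\<times>{1..m} \<union> map_prod \<tau> \<tau> ` ({1..n}\<times>{1..n} - F\<times>F))"
    proof (rule sum.union_disjoint[symmetric])
      show "{1..m}\<times>{1..m} \<inter> map_prod \<tau> \<tau> ` ({1..n}\<times>{1..n} - F\<times>F) = {}"
      proof (rule equals0I)
        fix q assume q: "q \<in> {1..m}\<times>{1..m} \<inter> map_prod \<tau> \<tau> ` ({1..n}\<times>{1..n} - F\<times>F)"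
        then have "q \<in> map_prod \<tau> \<tau> ` ({1..n}\<times>{1..n} - F\<times>F)" by blast
        then obtain r where r: "r \<in> {1..n}\<times>{1..n} - F\<times>F" "q = map_prod \<tau> \<tau> r" by (meson imageE)
        obtain i i' where ri: "r = (i,i')" by (cases r)
        have ii: "(i,i') \<in> {1..n}\<times>{1..n} - F\<times>F" "q = (\<tau> i, \<tau> i')" using r ri by auto
        then have "i \<in> {1..n}" "i' \<in> {1..n}" "\<not> (i \<in> F \<and> i' \<in> F)" by auto
        then have "m < \<tau> i \<or> m < \<tau> i'" using \<tau>out by blast
        then show False using q ii by auto
      qed
    qed auto
    also have "\<dots> \<le> SD" unfolding SD_def
    proof (rule sum_mono2)
      show "{1..m}\<times>{1..m} \<union> map_prod \<tau> \<tau> ` ({1..n}\<times>{1..n} - F\<times>F) \<subseteq> {1..l}\<times>{1..l}" (is "?A \<union> ?B \<subseteq> _")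
      proof -
        have "map_prod \<tau> \<tau> ` ({1..n}\<times>{1..n} - F\<times>F) \<subseteq> W \<times> W" using \<tau>W by auto
        also have "W \<times> W \<subseteq> {1..l}\<times>{1..l}" using Wsub by auto
        finally have "?B \<subseteq> {1..l}\<times>{1..l}" .
        moreover have "?A \<subseteq> {1..l}\<times>{1..l}" using mn nl by auto
        ultimately show ?thesis by blast
      qed
    qed (auto simp: Tnn)
    finally show ?thesis .
  qed

  have SGbound: "SG \<le> real n * (real n - 1) * cy"
  proof -
    have "SG \<le> sum (\<lambda>(i,i'). if i = i' then 0 else cy) ({1..n}\<times>{1..n})"
      unfolding SG_def
    proof (rule sum_mono)
      fix q assume q: "q \<in> {1..n}\<times>{1..n}"
      obtain i i' where qi0: "q = (i,i')" by (cases q)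
      have ii: "i \<in> {1..n}" "i' \<in> {1..n}" using q qi0 by auto
      show "Gt q \<le> (case q of (i,i') \<Rightarrow> if i = i' then 0 else cy)"
      proof (cases "i = i'")
        case True
        have "g i i = y0" using ge ii unfolding g_def ext_edge_def is_graph_def by auto
        moreover have "h (\<sigma> i) (\<sigma> i) = y0" using gf \<sigma>in[OF ii(1)] unfolding h_def ext_edge_def is_graph_def by auto
        ultimately show ?thesis using True qi0 dY0 unfolding Gt_def by simp
      next
        case False
        then show ?thesis using qi0 dYle unfolding Gt_def by simp
      qed
    qed
    also have "\<dots> = (\<Sum>i\<in>{1..n}. \<Sum>i'\<in>{1..n}. if i = i' then 0 else cy)"
      by (rule sum.cartesian_product[symmetric])
    also have "\<dots> = (\<Sum>i\<in>{1..n}. (real n - 1) * cy)"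
    proof (rule sum.cong)
      fix i assume i: "i \<in> {1..n}"
      have "(\<Sum>i'\<in>{1..n}. if i = i' then 0 else cy) = (\<Sum>i'\<in>{1..n}. cy - (if i = i' then cy else 0))"
        by (rule sum.cong) auto
      also have "\<dots> = real n * cy - cy" using i by (simp add: sum_subtractf)
      finally show "(\<Sum>i'\<in>{1..n}. if i = i' then 0 else cy) = (real n - 1) * cy" by (simp add: algebra_simps)
    qed simp
    also have "\<dots> = real n * (real n - 1) * cy" by simp
    finally show ?thesis .
  qed
  have SGnn: "0 \<le> SG" unfolding SG_def Gt_def by (auto intro: sum_nonneg)

  define Gv where "Gv = (\<Sum>i\<in>{1..m}. dX (v i) (w (\<sigma> i)) powr p)"
  define sF where "sF = (\<Sum>i\<in>F. dX (v i) (w (\<pi>0 i)) powr p)"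
  define Vd where "Vd = (\<Sum>i\<in>{1..l}. dA (a i) (b (\<pi>0 i)) powr p)"
  define fr where "fr = card F"
  have Gv_le: "Gv \<le> sF + (real m - real fr) * cx"
  proof -
    have "Gv \<le> (\<Sum>i\<in>{1..m}. if i \<in> F then dX (v i) (w (\<pi>0 i)) powr p else cx)"
      unfolding Gv_def
    proof (rule sum_mono)
      fix i assume i: "i \<in> {1..m}"
      show "dX (v i) (w (\<sigma> i)) powr p \<le> (if i \<in> F then dX (v i) (w (\<pi>0 i)) powr p else cx)"
      proof (cases "i \<in> F")
        case True
        then have "\<sigma> i = \<pi>0 i" using \<sigma>v \<tau>F Fn by auto
        then show ?thesis using True by simp
      qed (simp add: dXle)
    qed
    also have "\<dots> = sF + real (card ({1..m} - F)) * cx"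
      unfolding sF_def using Fm by (simp add: sum.If_cases Int_absorb1 Diff_eq[symmetric])
    also have "real (card ({1..m} - F)) = real m - real fr"
      unfolding fr_def using card_Diff_subset[OF finF Fm] card_mono[OF _ Fm] by (simp add: of_nat_diff)
    finally show ?thesis .
  qed
  have sF_le: "sF \<le> real fr * cx" unfolding sF_def fr_def
    using dXle by (intro sum_bounded_above) auto
  have sF_nn: "0 \<le> sF" unfolding sF_def by (auto intro: sum_nonneg)
  have Vd_ge: "Vd \<ge> sF + (real l - real fr) * c2 - (real n - real fr) * cy"
  proof -
    have "(\<Sum>i\<in>{1..l}. c2 - (if i \<in> W then cy else 0)
           + (if i \<in> F then dX (v i) (w (\<pi>0 i)) powr p - c2 + cy else 0)) \<le> Vd"
      unfolding Vd_def
    proof (rule sum_mono)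
      fix i assume i: "i \<in> {1..l}"
      have pi: "\<pi>0 i \<in> {1..l}" using \<pi>0in i .
      have iW: "i \<in> W \<longleftrightarrow> \<pi>0 i \<le> n" using i pi unfolding W_def by auto
      have iF: "i \<in> F \<longleftrightarrow> i \<le> m \<and> \<pi>0 i \<le> n" using iW i unfolding F_def by auto
      show "c2 - (if i \<in> W then cy else 0)
           + (if i \<in> F then dX (v i) (w (\<pi>0 i)) powr p - c2 + cy else 0) \<le> dA (a i) (b (\<pi>0 i)) powr p"
        by (cases "i \<le> m"; cases "\<pi>0 i \<le> n")
           (simp_all add: iW iF a_def b_def ext_vert_def dAOO dAOS' dASS' dASO)
    qed
    moreover have "(\<Sum>i\<in>{1..l}. c2 - (if i \<in> W then cy else 0)
           + (if i \<in> F then dX (v i) (w (\<pi>0 i)) powr p - c2 + cy else 0))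
         = real l * c2 - real n * cy + (sF - real fr * c2 + real fr * cy)"
    proof -
      have w1: "(\<Sum>i\<in>{1..l}. if i \<in> W then cy else 0) = sum (\<lambda>_. cy) ({1..l} \<inter> W)"
        by (rule sum.inter_restrict[symmetric]) simp
      have w2: "{1..l} \<inter> W = W" using Wsub by auto
      have f1: "(\<Sum>i\<in>{1..l}. if i \<in> F then dX (v i) (w (\<pi>0 i)) powr p - c2 + cy else 0)
          = sum (\<lambda>i. dX (v i) (w (\<pi>0 i)) powr p - c2 + cy) ({1..l} \<inter> F)"
        by (rule sum.inter_restrict[symmetric]) simp
      have f2: "{1..l} \<inter> F = F" using Fn nl by auto
      have f3: "sum (\<lambda>i. dX (v i) (w (\<pi>0 i)) powr p - c2 + cy) F = sF - real fr * c2 + real fr * cy"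
        by (simp add: sF_def fr_def sum.distrib sum_subtractf)
      show ?thesis
        unfolding sum.distrib sum_subtractf w1 w2 f1 f2 by (simp add: cardW sF_def fr_def)
    qed
    ultimately show ?thesis by (simp add: algebra_simps)
  qed
  have fr_m: "real fr \<le> real m" using cardF unfolding fr_def by simp

  define Gc where "Gc = gospa2_cost p C2 dX dY y0 m v e n w f \<sigma>"
  define Dc where "Dc = D_cost p dA dY l a g b h \<pi>0"
  have Gc_eq: "Gc = (real n - real m) * c2 + Gv + 1 / (2 * (real n - 1)) * SG"
    unfolding Gc_def gospa2_cost_def Gv_def c2_def using gospa_edge mn
    by (simp add: of_nat_diff)
  have Dc_eq: "Dc = Vd + 1 / (2 * (real l - 1)) * SD"
    unfolding Dc_def D_cost_def Vd_def SD_def T_def by simp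
  have SDnn: "0 \<le> SD" using SG_SD SGnn by linarith
  have key: "real l * Gc \<le> real n * Dc + real l * (real n - real m) * cy"
  proof -
    have A: "real l*((real n - real m)*c2 + Gv) \<le> real n*Vd + real l*(real n - real m)*cy - real n*(real l - real n)*cy"
      using arith_vertex[of "real fr" "real m" "real n" "real l" sF cx cy c2 Gv Vd]
        fr_m mn nl sF_nn sF_le cxnn cynn c2ge Gv_le Vd_ge by simp
    have int: "(real l - real n) * (real l - real n - 1) \<ge> 0"
    proof (cases "l = n")
      case False
      then have "real l - real n \<ge> 1" using nl by linarith
      then show ?thesis by simp
    qed simp
    have B: "real l * (1 / (2*(real n - 1)) * SG) \<le> real n*(1/(2*(real l - 1))*SD) + real n*(real l - real n)*cy"
      using arith_edge[of "real n" "real l" SG SD cy] n1 nl SG_SD SGnn SGbound cynn int by simp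
    show ?thesis using A B unfolding Gc_eq Dc_eq by (simp add: algebra_simps)
  qed
  have npos: "real n > 0" using n1 by simp
  have lpos: "real l > 0" using n1 nl by simp
  have key2: "Gc / real n \<le> Dc / real l + cy * (real (n - m) / real n)"
  proof -
    have "Gc / real n = (real l * Gc) / (real n * real l)" using lpos by simp
    also have "\<dots> \<le> (real n * Dc + real l * (real n - real m) * cy) / (real n * real l)"
      using key npos lpos by (intro divide_right_mono) auto
    also have "\<dots> = Dc / real l + cy * (real (n - m) / real n)"
      using npos lpos mn by (simp add: field_simps of_nat_diff)
    finally show ?thesis .
  qed

  define Gset where "Gset = (\<lambda>\<pi>. gospa2_cost p C2 dX dY y0 m v e n w f \<pi>) ` {\<pi>. \<pi> permutes {1..n}}"
  have finG: "finite Gset" unfolding Gset_def by (simp add: finite_permutations)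
  have GcG: "Gc \<in> Gset" unfolding Gset_def Gc_def using \<sigma>perm by blast
  have Gnn: "\<And>x. x \<in> Gset \<Longrightarrow> 0 \<le> x"
  proof -
    fix x assume "x \<in> Gset"
    then obtain \<pi> where x: "x = gospa2_cost p C2 dX dY y0 m v e n w f \<pi>" unfolding Gset_def by auto
    have h: "0 \<le> 1 / (2 * (real n - 1))" using n1 by simp
    show "0 \<le> x" unfolding x gospa2_cost_def
      by (intro add_nonneg_nonneg mult_nonneg_nonneg sum_nonneg h) (auto split: prod.splits)
  qed
  have minG: "Min Gset \<le> Gc" using Min_le[OF finG GcG] .
  have minGnn: "0 \<le> Min Gset" using Gnn Min_in[OF finG] GcG by blast
  have Dcnn: "0 \<le> Dc"
  proof -
    have "0 \<le> 1 / (2 * (real l - 1))" using n1 nl by simp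
    moreover have "0 \<le> Vd" unfolding Vd_def by (rule sum_nonneg) simp
    ultimately show ?thesis unfolding Dc_eq using SDnn by (intro add_nonneg_nonneg mult_nonneg_nonneg)
  qed
  have Gcnn: "0 \<le> Gc" using Gnn GcG by blast

  have L: "dGR2 p C2 dX dY y0 m v e n w f \<le> (Gc / real n) powr (1/p)"
  proof -
    have "dGR2 p C2 dX dY y0 m v e n w f = real n powr (- 1 / p) * Min Gset powr (1/p)"
      unfolding dGR2_def Gset_def ..
    also have "\<dots> \<le> real n powr (- 1 / p) * Gc powr (1/p)"
      using minG minGnn p0 by (intro mult_left_mono powr_mono2) auto
    also have "\<dots> = (Gc / real n) powr (1/p)"
      by (simp add: powr_divide powr_minus_divide divide_inverse powr_mult inverse_powr mult.commute)
    finally show ?thesis .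
  qed
  have R: "D_dist p dA dY l a g b h powr p = Dc / real l"
  proof -
    have "D_dist p dA dY l a g b h = real l powr (- 1 / p) * Dc powr (1/p)"
      unfolding D_dist_def Dset_def[symmetric] minD Dc_def ..
    then have "D_dist p dA dY l a g b h powr p = real l powr (- 1 / p * p) * Dc powr (1 / p * p)"
      by (simp add: powr_mult powr_powr)
    also have "\<dots> = Dc / real l" using p0 Dcnn lpos by (simp add: powr_neg_one)
    finally show ?thesis .
  qed
  have "(Gc / real n) powr (1/p) \<le> (Dc / real l + cy * (real (n - m) / real n)) powr (1/p)"
    using key2 Gcnn npos p0 by (intro powr_mono2) auto
  then show ?thesis using L R unfolding a_def[symmetric] b_def[symmetric] g_def[symmetric] h_def[symmetric]
    dA_def[symmetric] cy_def[symmetric] by simp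
qed
end
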